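(* Let $I_T\subseteq\mathbb{K}[x_1,\dots,x_d]$ be a toric ideal with $I_T\neq\langle x_1-1,\dots,x_d-1\rangle$. There exists a non-trivial linear loop whose invariant ideal is exactly $I_T$.
   Context: $\mathbb{K}=\overline{\mathbb{Q}}$. For an integer matrix $A=(a_{ij})\in\mathbb{Z}^{s\times d}$, let $\pi_A:\mathbb{K}[x_1,\dots,x_d]\to\mathbb{K}[z_1^{\pm1},\dots,z_s^{\pm1}]$ be the ring homomorphism sending $x_j\mapsto z_1^{a_{1j}}\cdots z_s^{a_{sj}}$; the toric ideal $I_A$ is the kernel of $\pi_A$, and a toric ideal is an ideal of the form $I_A$ for some integer matrix $A$. A linear loop with initial vector $\bm{s}\in\mathbb{Q}^d$ and update matrix $M\in\mathbb{Q}^{d\times d}$ has orbit $\{M^n\bm{s}: n\ge0\}$; a polynomial $P\in\mathbb{K}[\bm{x}]$ is an invariant if $P(M^n\bm{s})=0$ for all $n\ge0$, and the invariant ideal is the ideal of all invariants. The loop is non-trivial if its orbit is infinite. *)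

theory Defs
  imports "Jordan_Normal_Form.Matrix" "HOL-Library.Poly_Mapping"
    "HOL-Computational_Algebra.Polynomial"
begin

text \<open>Multivariate polynomials in variables x_0,...,x_(d-1) (paper: x_1..x_d) are
 poly_mappings from monomials (exponent vectors nat =>0 nat) to coefficients.
 The field K = algebraic closure of Q is realised as the algebraic complex numbers.\<close>

type_synonym mpoly = "(nat \<Rightarrow>\<^sub>0 nat) \<Rightarrow>\<^sub>0 complex"

definition Kpolys :: "nat \<Rightarrow> mpoly set" where
  "Kpolys d = {p. (\<forall>m\<in>Poly_Mapping.keys p. Poly_Mapping.keys m \<subseteq> {..<d}) \<and> (\<forall>m. algebraic (Poly_Mapping.lookup p m))}"

definition Var :: "nat \<Rightarrow> mpoly" where
  "Var i = Poly_Mapping.single (Poly_Mapping.single i 1) 1"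

definition eval_mpoly :: "mpoly \<Rightarrow> (nat \<Rightarrow> complex) \<Rightarrow> complex" where
  "eval_mpoly p x = (\<Sum>m\<in>Poly_Mapping.keys p. Poly_Mapping.lookup p m * (\<Prod>i\<in>Poly_Mapping.keys m. x i ^ Poly_Mapping.lookup m i))"

text \<open>Laurent polynomials in z_0..z_(s-1): exponent vectors nat =>0 int.\<close>
type_synonym lpoly = "(nat \<Rightarrow>\<^sub>0 int) \<Rightarrow>\<^sub>0 complex"

definition toric_exp :: "nat \<Rightarrow> nat \<Rightarrow> (nat \<Rightarrow> nat \<Rightarrow> int) \<Rightarrow> (nat \<Rightarrow>\<^sub>0 nat) \<Rightarrow> (nat \<Rightarrow>\<^sub>0 int)" where
  "toric_exp s d A m = Abs_poly_mapping (\<lambda>k. if k < s then (\<Sum>j<d. A k j * int (Poly_Mapping.lookup m j)) else 0)"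

definition pi_A :: "nat \<Rightarrow> nat \<Rightarrow> (nat \<Rightarrow> nat \<Rightarrow> int) \<Rightarrow> mpoly \<Rightarrow> lpoly" where
  "pi_A s d A p = (\<Sum>m\<in>Poly_Mapping.keys p. Poly_Mapping.single (toric_exp s d A m) (Poly_Mapping.lookup p m))"

definition toric_ideal :: "nat \<Rightarrow> nat \<Rightarrow> (nat \<Rightarrow> nat \<Rightarrow> int) \<Rightarrow> mpoly set" where
  "toric_ideal s d A = {p \<in> Kpolys d. pi_A s d A p = 0}"

definition is_toric_ideal :: "nat \<Rightarrow> mpoly set \<Rightarrow> bool" where
  "is_toric_ideal d I \<longleftrightarrow> (\<exists>s A. I = toric_ideal s d A)"

definition ones_ideal :: "nat \<Rightarrow> mpoly set" where
  "ones_ideal d = {p. \<exists>q. (\<forall>i<d. q i \<in> Kpolys d) \<and> p = (\<Sum>i<d. q i * (Var i - 1))}"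

definition loop_orbit :: "rat mat \<Rightarrow> rat vec \<Rightarrow> rat vec set" where
  "loop_orbit M s = {(M ^\<^sub>m n) *\<^sub>v s | n. True}"

definition nontrivial_loop :: "rat mat \<Rightarrow> rat vec \<Rightarrow> bool" where
  "nontrivial_loop M s \<longleftrightarrow> infinite (loop_orbit M s)"

definition vec_point :: "rat vec \<Rightarrow> nat \<Rightarrow> complex" where
  "vec_point v i = of_rat (v $ i)"

definition invariant_ideal :: "nat \<Rightarrow> rat mat \<Rightarrow> rat vec \<Rightarrow> mpoly set" where
  "invariant_ideal d M s = {P \<in> Kpolys d. \<forall>n. eval_mpoly P (vec_point ((M ^\<^sub>m n) *\<^sub>v s)) = 0}"

end

theory Submission
  imports Defs "HOL-Computational_Algebra.Primes" "HOL-Library.Infinite_Set"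
begin


definition qscale :: "rat \<Rightarrow> complex \<Rightarrow> complex" where
  "qscale r z = of_rat r * z"

interpretation qvs: vector_space qscale
  by unfold_locales (auto simp: qscale_def algebra_simps of_rat_add of_rat_mult)

lemma rats_scale_in_span:
  assumes "q \<in> \<rat>" "x \<in> qvs.span F" shows "q * x \<in> qvs.span F"
proof -
  obtain r where "q = of_rat r" using assms(1) Rats_cases by blast
  then show ?thesis using qvs.span_scale[OF assms(2), of r] by (simp add: qscale_def)
qed

lemma alg_powers_span:
  assumes "algebraic (a::complex)"
  shows "\<exists>n. \<forall>k. a ^ k \<in> qvs.span ((\<lambda>i. a ^ i) ` {..<n})"
proof -
  obtain p where p: "\<And>i. coeff p i \<in> \<rat>" "p \<noteq> 0" "poly p a = 0"
    using assms unfolding algebraic_altdef by blast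
  define n where "n = degree p"
  define l where "l = lead_coeff p"
  have l0: "l \<noteq> 0" using p(2) by (simp add: l_def)
  have lQ: "l \<in> \<rat>" using p(1) by (simp add: l_def)
  have "0 = (\<Sum>i\<le>n. coeff p i * a ^ i)" using p(3) by (simp add: poly_altdef n_def)
  also have "\<dots> = (\<Sum>i<n. coeff p i * a ^ i) + l * a ^ n"
    by (simp add: lessThan_Suc_atMost[symmetric] l_def n_def)
  finally have h: "l * a ^ n = - (\<Sum>i<n. coeff p i * a ^ i)"
    by (simp add: eq_neg_iff_add_eq_0 add.commute)
  have "a ^ n = (l * a ^ n) / l" using l0 by simp
  also have "\<dots> = - (\<Sum>i<n. coeff p i * a ^ i) / l" using h by simp
  also have "\<dots> = (\<Sum>i<n. (- coeff p i / l) * a ^ i)"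
    by (simp add: sum_divide_distrib sum_negf[symmetric])
  finally have an: "a ^ n = (\<Sum>i<n. (- coeff p i / l) * a ^ i)" .
  have "a ^ k \<in> qvs.span ((\<lambda>i. a ^ i) ` {..<n})" for k
  proof (induction k rule: less_induct)
    case (less k)
    show ?case
    proof (cases "k < n")
      case True then show ?thesis by (intro qvs.span_base) auto
    next
      case False
      have "a ^ k = a ^ (k - n) * a ^ n" using False by (simp flip: power_add)
      also have "\<dots> = (\<Sum>i<n. (- coeff p i / l) * a ^ (k - n + i))"
        by (subst an) (simp add: sum_distrib_left power_add algebra_simps)
      also have "\<dots> \<in> qvs.span ((\<lambda>i. a ^ i) ` {..<n})"
      proof (intro qvs.span_sum rats_scale_in_span)
        fix i assume "i \<in> {..<n}"
        then show "- coeff p i / l \<in> \<rat>" using p(1) lQ by auto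
        show "a ^ (k - n + i) \<in> qvs.span ((\<lambda>i. a ^ i) ` {..<n})"
          using \<open>i \<in> {..<n}\<close> False by (intro less) auto
      qed
      finally show ?thesis .
    qed
  qed
  then show ?thesis by blast
qed

lemma span_powers_alg:
  assumes "finite F" "\<And>k. c ^ k \<in> qvs.span F"
  shows "algebraic (c::complex)"
proof (cases "inj_on (\<lambda>k. c ^ k) {..card F}")
  case False
  then obtain i j where ij: "i \<noteq> j" "c ^ i = c ^ j" unfolding inj_on_def by blast
  define p where "p = monom (1::complex) i - monom 1 j"
  show ?thesis
  proof (rule algebraicI'[of p])
    show "coeff p k \<in> \<rat>" for k by (auto simp: p_def coeff_monom)
    have "coeff p i = 1" using ij by (simp add: p_def coeff_monom)
    then show "p \<noteq> 0" by auto
    show "poly p c = 0" using ij by (simp add: p_def poly_monom)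
  qed
next
  case True
  define N where "N = card F"
  define S where "S = (\<lambda>k. c ^ k) ` {..N}"
  have cS: "card S = N + 1" using True by (simp add: S_def N_def card_image)
  have fS: "finite S" by (simp add: S_def)
  have "S \<subseteq> qvs.span F" using assms(2) by (auto simp: S_def)
  then have "\<not> qvs.independent S"
    using qvs.independent_span_bound[OF assms(1)] cS N_def by fastforce
  then obtain T u where T: "T \<subseteq> S" "finite T" "(\<Sum>v\<in>T. qscale (u v) v) = 0" "\<exists>v\<in>T. u v \<noteq> 0"
    unfolding qvs.independent_explicit_finite_subsets by blast
  define w where "w v = (if v \<in> T then u v else 0)" for v
  have "(\<Sum>v\<in>S. qscale (w v) v) = (\<Sum>v\<in>T. qscale (u v) v)"
    using T(1) fS by (intro sum.mono_neutral_cong_right) (auto simp: w_def qscale_def)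
  also have "(\<Sum>v\<in>S. qscale (w v) v) = (\<Sum>k\<le>N. qscale (w (c ^ k)) (c ^ k))"
    unfolding S_def using True N_def by (subst sum.reindex) auto
  finally have sum0: "(\<Sum>k\<le>N. of_rat (w (c ^ k)) * c ^ k) = 0" using T(3) by (simp add: qscale_def)
  define p where "p = (\<Sum>k\<le>N. monom (of_rat (w (c ^ k)) :: complex) k)"
  have cp: "coeff p k = (if k \<le> N then of_rat (w (c ^ k)) else 0)" for k
    by (simp add: p_def coeff_sum coeff_monom)
  show ?thesis
  proof (rule algebraicI'[of p])
    show "coeff p k \<in> \<rat>" for k by (simp add: cp)
    obtain v where v: "v \<in> T" "u v \<noteq> 0" using T by blast
    then obtain k where k: "k \<le> N" "v = c ^ k" using T(1) by (auto simp: S_def)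
    then have "coeff p k \<noteq> 0" using v by (simp add: cp w_def)
    then show "p \<noteq> 0" by auto
    show "poly p c = 0" using sum0 by (simp add: p_def poly_sum poly_monom)
  qed
qed

lemma span_mult:
  assumes "x \<in> qvs.span A" "y \<in> qvs.span B"
  shows "x * y \<in> qvs.span ((\<lambda>(a,b). a * b) ` (A \<times> B))"
  using assms(1)
proof (induction x rule: qvs.span_induct_alt)
  case base then show ?case by (simp add: qvs.span_zero)
next
  case (step c x z)
  have "x * y \<in> qvs.span ((\<lambda>(a,b). a * b) ` (A \<times> B))"
    using assms(2)
  proof (induction y rule: qvs.span_induct_alt)
    case base then show ?case by (simp add: qvs.span_zero)
  next
    case (step c' x' z')
    have eq: "x * (qscale c' x' + z') = qscale c' (x * x') + x * z'"
      by (simp add: qscale_def algebra_simps)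
    have "x * x' \<in> qvs.span ((\<lambda>(a,b). a * b) ` (A \<times> B))"
      using \<open>x \<in> A\<close> \<open>x' \<in> B\<close> by (intro qvs.span_base) auto
    then show ?case unfolding eq by (intro qvs.span_add qvs.span_scale step.IH)
  qed
  moreover have eq: "(qscale c x + z) * y = qscale c (x * y) + z * y"
    by (simp add: qscale_def algebra_simps)
  ultimately show ?case unfolding eq by (intro qvs.span_add qvs.span_scale step.IH)
qed

lemma algebraic_add:
  assumes "algebraic (a::complex)" "algebraic b"
  shows "algebraic (a + b)"
proof -
  obtain n where n: "\<And>k. a ^ k \<in> qvs.span ((\<lambda>i. a ^ i) ` {..<n})"
    using alg_powers_span[OF assms(1)] by blast
  obtain m where m: "\<And>k. b ^ k \<in> qvs.span ((\<lambda>i. b ^ i) ` {..<m})"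
    using alg_powers_span[OF assms(2)] by blast
  define F where "F = (\<lambda>(x,y). x * y) ` (((\<lambda>i. a ^ i) ` {..<n}) \<times> ((\<lambda>i. b ^ i) ` {..<m}))"
  have fF: "finite F" by (simp add: F_def)
  have ab: "a ^ k * b ^ l \<in> qvs.span F" for k l
    unfolding F_def by (rule span_mult[OF n m])
  show ?thesis
  proof (rule span_powers_alg[OF fF])
    fix N
    have "(a + b) ^ N = (\<Sum>k\<le>N. of_nat (N choose k) * (a ^ k * b ^ (N - k)))"
      by (simp add: binomial_ring mult.assoc)
    also have "\<dots> \<in> qvs.span F"
      by (intro qvs.span_sum rats_scale_in_span[OF Rats_of_nat] ab)
    finally show "(a + b) ^ N \<in> qvs.span F" .
  qed
qed

lemma algebraic_uminus:
  assumes "algebraic (a::complex)"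
  shows "algebraic (- a)"
proof -
  obtain n where n: "\<And>k. a ^ k \<in> qvs.span ((\<lambda>i. a ^ i) ` {..<n})"
    using alg_powers_span[OF assms(1)] by blast
  show ?thesis
  proof (rule span_powers_alg[of "(\<lambda>i. a ^ i) ` {..<n}"])
    fix N
    have "(- a) ^ N = (-1) ^ N * a ^ N" by (rule power_minus)
    also have "\<dots> \<in> qvs.span ((\<lambda>i. a ^ i) ` {..<n})"
      by (rule rats_scale_in_span[OF _ n]) (simp add: Rats_power)
    finally show "(- a) ^ N \<in> qvs.span ((\<lambda>i. a ^ i) ` {..<n})" .
  qed simp
qed

lemma algebraic_diff:
  "algebraic (a::complex) \<Longrightarrow> algebraic b \<Longrightarrow> algebraic (a - b)"
  using algebraic_add[of a "- b"] algebraic_uminus[of b] by simp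

lemma algebraic_sum:
  "(\<And>x. x \<in> A \<Longrightarrow> algebraic (f x :: complex)) \<Longrightarrow> algebraic (sum f A)"
  by (induction A rule: infinite_finite_induct) (simp_all add: algebraic_add)



definition Ssum :: "mpoly \<Rightarrow> complex" where
  "Ssum p = (\<Sum>m\<in>Poly_Mapping.keys p. Poly_Mapping.lookup p m)"

lemma Ssum_superset:
  assumes "finite K" "Poly_Mapping.keys p \<subseteq> K"
  shows "Ssum p = (\<Sum>m\<in>K. Poly_Mapping.lookup p m)"
  unfolding Ssum_def using assms
  by (intro sum.mono_neutral_left) (auto simp: in_keys_iff)

lemma Ssum_add: "Ssum (p + q) = Ssum p + Ssum q"
proof -
  let ?K = "Poly_Mapping.keys p \<union> Poly_Mapping.keys q"
  have "Ssum (p + q) = (\<Sum>m\<in>?K. Poly_Mapping.lookup (p + q) m)"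
    using keys_add[of p q] by (intro Ssum_superset) auto
  also have "\<dots> = (\<Sum>m\<in>?K. Poly_Mapping.lookup p m) + (\<Sum>m\<in>?K. Poly_Mapping.lookup q m)"
    by (simp add: lookup_add sum.distrib)
  also have "\<dots> = Ssum p + Ssum q"
    by (subst (1 2) Ssum_superset[of ?K]) auto
  finally show ?thesis .
qed

lemma Ssum_zero [simp]: "Ssum 0 = 0"
  by (simp add: Ssum_def)

lemma Ssum_uminus: "Ssum (- p) = - Ssum p"
proof -
  have "Ssum p + Ssum (- p) = 0" using Ssum_add[of p "- p"] by simp
  then show ?thesis by (metis add.commute eq_neg_iff_add_eq_0)
qed

lemma Ssum_diff: "Ssum (p - q) = Ssum p - Ssum q"
  using Ssum_add[of p "- q"] Ssum_uminus[of q] by simp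

lemma Ssum_single [simp]: "Ssum (Poly_Mapping.single m c) = c"
  by (simp add: Ssum_def)

lemma Ssum_sum: "Ssum (sum f A) = (\<Sum>x\<in>A. Ssum (f x))"
  by (induction A rule: infinite_finite_induct) (simp_all add: Ssum_add)

lemma single_sum: "Poly_Mapping.single k (sum f A) = (\<Sum>x\<in>A. Poly_Mapping.single k (f x))"
  by (induction A rule: infinite_finite_induct) (simp_all add: single_add)

lemma expansion:
  "p = (\<Sum>m\<in>Poly_Mapping.keys p. Poly_Mapping.single m (Poly_Mapping.lookup p m))"
proof (rule poly_mapping_eqI)
  fix k
  have "(\<Sum>m\<in>Poly_Mapping.keys p. Poly_Mapping.lookup (Poly_Mapping.single m (Poly_Mapping.lookup p m)) k)
        = (\<Sum>m\<in>Poly_Mapping.keys p. if m = k then Poly_Mapping.lookup p m else 0)"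
    by (intro sum.cong) (auto simp: lookup_single)
  also have "\<dots> = Poly_Mapping.lookup p k"
    by (simp add: in_keys_iff)
  finally show "Poly_Mapping.lookup p k = Poly_Mapping.lookup (\<Sum>m\<in>Poly_Mapping.keys p. Poly_Mapping.single m (Poly_Mapping.lookup p m)) k"
    by (simp add: lookup_sum)
qed

lemma Kpolys_zero [simp]: "0 \<in> Kpolys d"
  by (simp add: Kpolys_def)

lemma Kpolys_add: "p \<in> Kpolys d \<Longrightarrow> q \<in> Kpolys d \<Longrightarrow> p + q \<in> Kpolys d"
proof -
  assume p: "p \<in> Kpolys d" and q: "q \<in> Kpolys d"
  have "Poly_Mapping.keys m \<subseteq> {..<d}" if "m \<in> Poly_Mapping.keys (p + q)" for m
    using keys_add[of p q] that p q unfolding Kpolys_def by blast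
  moreover have "algebraic (Poly_Mapping.lookup (p + q) m)" for m
    using p q unfolding Kpolys_def lookup_add by (intro algebraic_add) auto
  ultimately show ?thesis unfolding Kpolys_def by blast
qed

lemma Kpolys_uminus: "p \<in> Kpolys d \<Longrightarrow> - p \<in> Kpolys d"
  unfolding Kpolys_def
  by (auto simp: in_keys_iff intro!: algebraic_uminus)

lemma Kpolys_diff: "p \<in> Kpolys d \<Longrightarrow> q \<in> Kpolys d \<Longrightarrow> p - q \<in> Kpolys d"
  using Kpolys_add[of p d "- q"] Kpolys_uminus[of q d] by simp

lemma Kpolys_sum: "(\<And>x. x \<in> A \<Longrightarrow> f x \<in> Kpolys d) \<Longrightarrow> sum f A \<in> Kpolys d"
  by (induction A rule: infinite_finite_induct) (simp_all add: Kpolys_add)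

lemma Kpolys_single:
  "Poly_Mapping.keys m \<subseteq> {..<d} \<Longrightarrow> algebraic c \<Longrightarrow> Poly_Mapping.single m c \<in> Kpolys d"
  unfolding Kpolys_def by (auto simp: lookup_single when_def)

lemma shift_expand:
  "Poly_Mapping.single m 1 * (q::mpoly) = (\<Sum>k\<in>Poly_Mapping.keys q. Poly_Mapping.single (m + k) (Poly_Mapping.lookup q k))"
proof -
  have "Poly_Mapping.single m 1 * q = Poly_Mapping.single m 1 * (\<Sum>k\<in>Poly_Mapping.keys q. Poly_Mapping.single k (Poly_Mapping.lookup q k))"
    by (subst expansion[of q]) simp
  also have "\<dots> = (\<Sum>k\<in>Poly_Mapping.keys q. Poly_Mapping.single (m + k) (Poly_Mapping.lookup q k))"
    by (simp add: sum_distrib_left mult_single)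
  finally show ?thesis .
qed

lemma Kpolys_shift:
  assumes "Poly_Mapping.keys m \<subseteq> {..<d}" "q \<in> Kpolys d"
  shows "Poly_Mapping.single m 1 * (q::mpoly) \<in> Kpolys d"
  unfolding shift_expand
proof (intro Kpolys_sum Kpolys_single)
  fix k assume k: "k \<in> Poly_Mapping.keys q"
  then show "algebraic (Poly_Mapping.lookup q k)" using assms(2) by (simp add: Kpolys_def)
  show "Poly_Mapping.keys (m + k) \<subseteq> {..<d}"
    using keys_add[of m k] assms k by (auto simp: Kpolys_def)
qed

lemma Ssum_shift: "Ssum (Poly_Mapping.single m 1 * (q::mpoly)) = Ssum q"
  unfolding shift_expand Ssum_sum Ssum_single by (simp add: Ssum_def)

lemma ones_sub:
  assumes "p \<in> ones_ideal d"
  shows "p \<in> Kpolys d \<and> Ssum p = 0"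
proof -
  obtain q where q: "\<And>i. i < d \<Longrightarrow> q i \<in> Kpolys d" "p = (\<Sum>i<d. q i * (Var i - 1))"
    using assms by (auto simp: ones_ideal_def)
  have eq: "q i * (Var i - 1) = Var i * q i - q i" for i
    by (simp add: algebra_simps)
  have vq: "Var i * q i \<in> Kpolys d" if "i < d" for i
    unfolding Var_def by (rule Kpolys_shift) (use that q(1) in auto)
  have "p = (\<Sum>i<d. Var i * q i - q i)" using q(2) eq by simp
  moreover have "(\<Sum>i<d. Var i * q i - q i) \<in> Kpolys d"
    by (intro Kpolys_sum Kpolys_diff vq q(1)) auto
  moreover have "Ssum (\<Sum>i<d. Var i * q i - q i) = 0"
    by (simp add: Ssum_sum Ssum_diff Var_def Ssum_shift)
  ultimately show ?thesis by simp
qed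


lemma onesE:
  assumes "p \<in> ones_ideal d"
  obtains q where "\<forall>i<d. q i \<in> Kpolys d" "p = (\<Sum>i<d. q i * (Var i - 1))"
  using assms unfolding ones_ideal_def mem_Collect_eq by (elim exE conjE) simp

lemma onesI:
  assumes "\<forall>i<d. q i \<in> Kpolys d" "p = (\<Sum>i<d. q i * (Var i - 1))"
  shows "p \<in> ones_ideal d"
  unfolding ones_ideal_def mem_Collect_eq by (rule exI[of _ q]) (use assms in simp)

lemma O_add: "p1 \<in> ones_ideal d \<Longrightarrow> p2 \<in> ones_ideal d \<Longrightarrow> p1 + p2 \<in> ones_ideal d"
proof -
  assume a1: "p1 \<in> ones_ideal d" and a2: "p2 \<in> ones_ideal d"
  obtain q1 where q1: "\<forall>i<d. q1 i \<in> Kpolys d" "p1 = (\<Sum>i<d. q1 i * (Var i - 1))"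
    using a1 by (rule onesE)
  obtain q2 where q2: "\<forall>i<d. q2 i \<in> Kpolys d" "p2 = (\<Sum>i<d. q2 i * (Var i - 1))"
    using a2 by (rule onesE)
  have "p1 + p2 = (\<Sum>i<d. (q1 i + q2 i) * (Var i - 1))"
    unfolding q1(2) q2(2) by (simp only: distrib_right sum.distrib)
  moreover have "\<forall>i<d. q1 i + q2 i \<in> Kpolys d" using q1 q2 by (simp add: Kpolys_add)
  ultimately show ?thesis by (intro onesI)
qed

lemma O_zero: "0 \<in> ones_ideal d"
  by (rule onesI[of d "\<lambda>_. 0"]) simp_all

lemma O_sum: "(\<And>x. x \<in> A \<Longrightarrow> f x \<in> ones_ideal d) \<Longrightarrow> sum f A \<in> ones_ideal d"
  by (induction A rule: infinite_finite_induct) (simp_all add: O_add O_zero)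

lemma O_basic:
  assumes "i < d" "q \<in> Kpolys d"
  shows "q * (Var i - 1) \<in> ones_ideal d"
proof (rule onesI[of d "\<lambda>j. if j = i then q else 0"])
  show "\<forall>j<d. (if j = i then q else 0) \<in> Kpolys d" using assms(2) by simp
  have "(\<Sum>j<d. (if j = i then q else 0) * (Var j - 1)) = (\<Sum>j<d. if j = i then q * (Var j - 1) else 0)"
    by (intro sum.cong) auto
  also have "\<dots> = q * (Var i - 1)" using assms(1) by simp
  finally show "q * (Var i - 1) = (\<Sum>j<d. (if j = i then q else 0) * (Var j - 1))" by simp
qed

lemma step_identity:
  "Poly_Mapping.single (m + Poly_Mapping.single i 1) c - Poly_Mapping.single 0 c
   = Poly_Mapping.single m c * (Var i - 1) + (Poly_Mapping.single m c - Poly_Mapping.single 0 (c::complex))"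
proof -
  have "Poly_Mapping.single m c * Var i = Poly_Mapping.single (m + Poly_Mapping.single i 1) c"
    by (simp add: Var_def mult_single)
  then show ?thesis by (simp add: algebra_simps)
qed

lemma keys_add_nat: "Poly_Mapping.keys (f + g :: 'a \<Rightarrow>\<^sub>0 nat) = Poly_Mapping.keys f \<union> Poly_Mapping.keys g"
  by (auto simp: in_keys_iff lookup_add)

lemma update_eq: "a \<notin> Poly_Mapping.keys f \<Longrightarrow> Poly_Mapping.update a b f = f + Poly_Mapping.single a b"
  by (rule poly_mapping_eqI) (auto simp: lookup_update lookup_add lookup_single in_keys_iff)

lemma O_mono:
  assumes "Poly_Mapping.keys (m :: nat \<Rightarrow>\<^sub>0 nat) \<subseteq> {..<d}" "algebraic c"
  shows "Poly_Mapping.single m c - Poly_Mapping.single 0 c \<in> ones_ideal d"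
  using assms(1)
proof (induction m rule: update_induct)
  case const then show ?case by (simp add: O_zero)
next
  case (update f a b)
  have upd: "Poly_Mapping.update a b f = f + Poly_Mapping.single a b" using update.hyps(1) by (rule update_eq)
  have kf: "Poly_Mapping.keys f \<subseteq> {..<d}" and ad: "a < d"
    using update.prems update.hyps unfolding upd keys_add_nat by auto
  have "Poly_Mapping.single (f + Poly_Mapping.single a b') c - Poly_Mapping.single 0 c \<in> ones_ideal d" for b'
  proof (induction b')
    case 0 then show ?case using update.IH kf by simp
  next
    case (Suc b')
    have e: "f + Poly_Mapping.single a (Suc b') = (f + Poly_Mapping.single a b') + Poly_Mapping.single a 1"
      by (metis Suc_eq_plus1 add.assoc single_add)
    have km: "Poly_Mapping.keys (f + Poly_Mapping.single a b') \<subseteq> {..<d}"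
      using kf ad unfolding keys_add_nat by auto
    show ?case unfolding e step_identity
      by (intro O_add O_basic Suc.IH ad Kpolys_single km assms(2))
  qed
  then show ?case unfolding upd .
qed

lemma ones_sup:
  assumes "p \<in> Kpolys d" "Ssum p = 0"
  shows "p \<in> ones_ideal d"
proof -
  have "p = (\<Sum>m\<in>Poly_Mapping.keys p. Poly_Mapping.single m (Poly_Mapping.lookup p m))"
    by (rule expansion)
  also have "\<dots> = (\<Sum>m\<in>Poly_Mapping.keys p. Poly_Mapping.single m (Poly_Mapping.lookup p m) - Poly_Mapping.single 0 (Poly_Mapping.lookup p m))
      + Poly_Mapping.single 0 (Ssum p)"
    by (simp add: sum_subtractf Ssum_def single_sum)
  also have "\<dots> = (\<Sum>m\<in>Poly_Mapping.keys p. Poly_Mapping.single m (Poly_Mapping.lookup p m) - Poly_Mapping.single 0 (Poly_Mapping.lookup p m))"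
    using assms(2) by simp
  also have "\<dots> \<in> ones_ideal d"
    using assms(1) by (intro O_sum O_mono) (auto simp: Kpolys_def)
  finally show ?thesis .
qed

lemma ones_eq: "ones_ideal d = {p \<in> Kpolys d. Ssum p = 0}"
  using ones_sub ones_sup by blast



definition pr :: "nat \<Rightarrow> nat" where "pr = enumerate {p. prime p}"

lemma prime_pr: "prime (pr k)"
  unfolding pr_def using enumerate_in_set[OF primes_infinite] by blast

lemma inj_pr: "inj pr"
  unfolding pr_def using strict_mono_enumerate[OF primes_infinite] strict_mono_imp_inj_on by blast

lemma pr_pos: "0 < pr k"
  using prime_pr[of k] prime_gt_0_nat by blast

definition rv :: "nat \<Rightarrow> (nat \<Rightarrow> int) \<Rightarrow> 'a::field" where
  "rv s e = (\<Prod>k<s. (of_nat (pr k)) powi e k)"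

lemma rv_nonzero: "rv s e \<noteq> (0::'a::field_char_0)"
  unfolding rv_def using pr_pos by (auto simp: power_int_not_zero)

lemma rv_pos: "rv s e > (0::'a::linordered_field)"
  unfolding rv_def using pr_pos by (intro prod_pos) auto

lemma of_rat_powi: "of_rat (x powi n) = (of_rat x powi n :: 'a::field_char_0)"
  by (simp add: power_int_def of_rat_power of_rat_inverse)

lemma of_rat_rv: "of_rat (rv s e) = (rv s e :: 'a::field_char_0)"
  by (simp add: rv_def of_rat_prod of_rat_powi)

lemma prod_pr_mult:
  "multiplicity (pr j) (\<Prod>k<s. pr k ^ a k) = (if j < s then a j else 0)"
proof -
  have "(\<Prod>k<s. pr k ^ a k) = (\<Prod>p\<in>pr ` {..<s}. p ^ a (inv_into UNIV pr p))"
    using inj_pr by (subst prod.reindex) (auto simp: inj_on_def inv_f_f)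
  also have "multiplicity (pr j) \<dots> = (if pr j \<in> pr ` {..<s} then a (inv_into UNIV pr (pr j)) else 0)"
    by (rule multiplicity_prod_prime_powers) (auto simp: prime_pr)
  also have "\<dots> = (if j < s then a j else 0)"
    using inj_pr by (auto simp: inv_f_f inj_image_mem_iff)
  finally show ?thesis .
qed

lemma rv_inj:
  assumes "rv s e = (rv s f :: 'a::field_char_0)" "j < s"
  shows "e j = f j"
proof -
  define a where "a k = nat (e k - f k)" for k
  define b where "b k = nat (f k - e k)" for k
  have ef: "e k + int (b k) = f k + int (a k)" for k by (simp add: a_def b_def)
  have pne: "(of_nat (pr k) :: 'a) \<noteq> 0" for k using pr_pos[of k] by simp
  have "rv s e * (\<Prod>k<s. of_nat (pr k) ^ b k) = (\<Prod>k<s. (of_nat (pr k) :: 'a) powi (e k + int (b k)))"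
    unfolding rv_def prod.distrib[symmetric] using pne by (intro prod.cong) (auto simp: power_int_add)
  also have "\<dots> = (\<Prod>k<s. (of_nat (pr k) :: 'a) powi (f k + int (a k)))" by (simp add: ef)
  also have "\<dots> = rv s f * (\<Prod>k<s. of_nat (pr k) ^ a k)"
    unfolding rv_def prod.distrib[symmetric] using pne by (intro prod.cong) (auto simp: power_int_add)
  finally have "(\<Prod>k<s. (of_nat (pr k) :: 'a) ^ b k) = (\<Prod>k<s. of_nat (pr k) ^ a k)"
    using assms(1) rv_nonzero[of s f] by auto
  then have "of_nat (\<Prod>k<s. pr k ^ b k) = (of_nat (\<Prod>k<s. pr k ^ a k) :: 'a)" by simp
  then have "(\<Prod>k<s. pr k ^ b k) = (\<Prod>k<s. pr k ^ a k)" by (simp only: of_nat_eq_iff)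
  then have "multiplicity (pr j) (\<Prod>k<s. pr k ^ b k) = multiplicity (pr j) (\<Prod>k<s. pr k ^ a k)" by simp
  then have "b j = a j" using assms(2) by (simp add: prod_pr_mult)
  then show ?thesis by (simp add: a_def b_def)
qed

lemma exp_indep:
  assumes "finite E" "inj_on r E" "\<And>n. (\<Sum>e\<in>E. c e * r e ^ n) = (0::complex)"
  shows "\<forall>e\<in>E. c e = 0"
  using assms
proof (induction E arbitrary: c rule: finite_induct)
  case empty then show ?case by simp
next
  case (insert x F)
  have injF: "inj_on r F" using insert.prems(1) by (simp add: inj_on_insert)
  have rx: "r e \<noteq> r x" if "e \<in> F" for e using insert.prems(1) insert.hyps(2) that by (auto simp: inj_on_def)
  have "(\<Sum>e\<in>F. (c e * (r e - r x)) * r e ^ n) = 0" for n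
  proof -
    have "(\<Sum>e\<in>F. (c e * (r e - r x)) * r e ^ n)
        = (\<Sum>e\<in>insert x F. c e * r e ^ Suc n) - r x * (\<Sum>e\<in>insert x F. c e * r e ^ n)"
      using insert.hyps by (simp add: sum_distrib_left sum_subtractf[symmetric] algebra_simps)
    also have "\<dots> = 0" unfolding insert.prems(2) by simp
    finally show ?thesis .
  qed
  then have "\<forall>e\<in>F. c e * (r e - r x) = 0" by (intro insert.IH[OF injF]) auto
  then have cF: "\<forall>e\<in>F. c e = 0" using rx by auto
  have "(\<Sum>e\<in>insert x F. c e * r e ^ 0) = 0" by (rule insert.prems(2))
  then have "c x = 0" using insert.hyps cF by simp
  then show ?case using cF by simp
qed

definition lamq :: "nat \<Rightarrow> (nat \<Rightarrow> nat \<Rightarrow> int) \<Rightarrow> nat \<Rightarrow> rat" where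
  "lamq s A j = rv s (\<lambda>k. A k j)"

definition Mdiag :: "nat \<Rightarrow> (nat \<Rightarrow> rat) \<Rightarrow> rat mat" where
  "Mdiag d l = mat d d (\<lambda>(i,j). if i = j then l i else 0)"

lemma Mdiag_carrier: "Mdiag d l \<in> carrier_mat d d"
  by (simp add: Mdiag_def)

lemma Mdiag_mult: "w \<in> carrier_vec d \<Longrightarrow> Mdiag d l *\<^sub>v w = vec d (\<lambda>i. l i * w $ i)"
proof (rule eq_vecI)
  assume w: "w \<in> carrier_vec d"
  fix i assume "i < dim_vec (vec d (\<lambda>i. l i * w $ i))"
  then have i: "i < d" by simp
  have "(Mdiag d l *\<^sub>v w) $ i = (\<Sum>j<d. (if i = j then l i else 0) * w $ j)"
    using i w by (simp add: Mdiag_def scalar_prod_def row_def atLeast0LessThan)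
  also have "\<dots> = (\<Sum>j<d. if j = i then l i * w $ j else 0)"
    by (rule sum.cong) auto
  also have "\<dots> = l i * w $ i"
    using i by simp
  finally show "(Mdiag d l *\<^sub>v w) $ i = vec d (\<lambda>i. l i * w $ i) $ i" using i by simp
qed (simp add: Mdiag_def)

lemma Mdiag_pow: "w \<in> carrier_vec d \<Longrightarrow> (Mdiag d l ^\<^sub>m n) *\<^sub>v w = vec d (\<lambda>i. l i ^ n * w $ i)"
proof (induction n arbitrary: w)
  case 0 then show ?case by (auto simp: Mdiag_def)
next
  case (Suc n)
  have "(Mdiag d l ^\<^sub>m Suc n) *\<^sub>v w = (Mdiag d l ^\<^sub>m n) *\<^sub>v (Mdiag d l *\<^sub>v w)"
    using assoc_mult_mat_vec[OF pow_carrier_mat[OF Mdiag_carrier] Mdiag_carrier Suc.prems] by simp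
  also have "\<dots> = vec d (\<lambda>i. l i ^ n * (Mdiag d l *\<^sub>v w) $ i)"
    using Suc.prems by (intro Suc.IH mult_mat_vec_carrier[OF Mdiag_carrier])
  also have "\<dots> = vec d (\<lambda>i. l i ^ Suc n * w $ i)"
    using Suc.prems by (intro eq_vecI) (auto simp: Mdiag_mult)
  finally show ?case .
qed


lemma lookup_te:
  "Poly_Mapping.lookup (toric_exp s d A m) k = (if k < s then (\<Sum>j<d. A k j * int (Poly_Mapping.lookup m j)) else 0)"
proof -
  have "finite {k. (if k < s then (\<Sum>j<d. A k j * int (Poly_Mapping.lookup m j)) else 0) \<noteq> 0}"
    by (rule finite_subset[of _ "{..<s}"]) auto
  then show ?thesis unfolding toric_exp_def by simp
qed

lemma powi_sum: "(x::'a::field) \<noteq> 0 \<Longrightarrow> x powi (\<Sum>j\<in>J. g j) = (\<Prod>j\<in>J. x powi g j)"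
  by (induction J rule: infinite_finite_induct) (simp_all add: power_int_add)

lemma mono_eval:
  assumes "Poly_Mapping.keys m \<subseteq> {..<d}"
  shows "(\<Prod>i\<in>Poly_Mapping.keys m. (of_rat (lamq s A i ^ n) :: complex) ^ Poly_Mapping.lookup m i)
         = (rv s (Poly_Mapping.lookup (toric_exp s d A m))) ^ n"
proof -
  define lamC where "lamC i = (rv s (\<lambda>k. A k i) :: complex)" for i
  have pne: "(of_nat (pr k) :: complex) \<noteq> 0" for k using pr_pos[of k] by simp
  have "(\<Prod>i\<in>Poly_Mapping.keys m. (of_rat (lamq s A i ^ n) :: complex) ^ Poly_Mapping.lookup m i)
      = (\<Prod>i\<in>Poly_Mapping.keys m. (lamC i ^ n) ^ Poly_Mapping.lookup m i)"
    by (simp add: lamq_def lamC_def of_rat_power of_rat_rv)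
  also have "\<dots> = (\<Prod>i<d. (lamC i ^ n) ^ Poly_Mapping.lookup m i)"
    using assms by (intro prod.mono_neutral_left) (auto simp: in_keys_iff)
  also have "\<dots> = (\<Prod>i<d. lamC i ^ Poly_Mapping.lookup m i) ^ n"
    by (simp add: prod_power_distrib power_mult[symmetric] mult.commute)
  also have "(\<Prod>i<d. lamC i ^ Poly_Mapping.lookup m i) = (\<Prod>i<d. \<Prod>k<s. ((of_nat (pr k) :: complex) powi A k i) ^ Poly_Mapping.lookup m i)"
    by (simp add: lamC_def rv_def prod_power_distrib)
  also have "\<dots> = (\<Prod>k<s. \<Prod>i<d. ((of_nat (pr k) :: complex) powi A k i) ^ Poly_Mapping.lookup m i)"
    by (rule prod.swap)
  also have "\<dots> = (\<Prod>k<s. (of_nat (pr k) :: complex) powi (\<Sum>j<d. A k j * int (Poly_Mapping.lookup m j)))"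
    using pne by (simp add: powi_sum power_int_mult)
  also have "\<dots> = rv s (Poly_Mapping.lookup (toric_exp s d A m))"
    unfolding rv_def by (intro prod.cong) (auto simp: lookup_te)
  finally show ?thesis .
qed

definition pt :: "nat \<Rightarrow> nat \<Rightarrow> (nat \<Rightarrow> nat \<Rightarrow> int) \<Rightarrow> nat \<Rightarrow> nat \<Rightarrow> complex" where
  "pt s d A n = vec_point ((Mdiag d (lamq s A) ^\<^sub>m n) *\<^sub>v vec d (\<lambda>_. 1))"

lemma pt_eq: "i < d \<Longrightarrow> pt s d A n i = of_rat (lamq s A i ^ n)"
  by (simp add: pt_def Mdiag_pow vec_point_def)

lemma lookup_pi:
  "Poly_Mapping.lookup (pi_A s d A P) e = (\<Sum>m\<in>{m\<in>Poly_Mapping.keys P. toric_exp s d A m = e}. Poly_Mapping.lookup P m)"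
proof -
  have "Poly_Mapping.lookup (pi_A s d A P) e = (\<Sum>m\<in>Poly_Mapping.keys P. if toric_exp s d A m = e then Poly_Mapping.lookup P m else 0)"
    unfolding pi_A_def lookup_sum by (intro sum.cong) (auto simp: lookup_single)
  also have "\<dots> = (\<Sum>m\<in>{m\<in>Poly_Mapping.keys P. toric_exp s d A m = e}. Poly_Mapping.lookup P m)"
    by (simp add: sum.inter_filter)
  finally show ?thesis .
qed

lemma eval_identity:
  assumes "P \<in> Kpolys d"
  shows "eval_mpoly P (pt s d A n) = (\<Sum>e\<in>toric_exp s d A ` Poly_Mapping.keys P.
            Poly_Mapping.lookup (pi_A s d A P) e * rv s (Poly_Mapping.lookup e) ^ n)"
proof -
  let ?te = "toric_exp s d A"
  let ?r = "\<lambda>e. (rv s (Poly_Mapping.lookup e) :: complex)"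
  have "eval_mpoly P (pt s d A n) = (\<Sum>m\<in>Poly_Mapping.keys P. Poly_Mapping.lookup P m * ?r (?te m) ^ n)"
    unfolding eval_mpoly_def
  proof (intro sum.cong refl arg_cong2[where f = "(*)"])
    fix m assume m: "m \<in> Poly_Mapping.keys P"
    then have km: "Poly_Mapping.keys m \<subseteq> {..<d}" using assms by (auto simp: Kpolys_def)
    have "(\<Prod>i\<in>Poly_Mapping.keys m. pt s d A n i ^ Poly_Mapping.lookup m i)
        = (\<Prod>i\<in>Poly_Mapping.keys m. (of_rat (lamq s A i ^ n) :: complex) ^ Poly_Mapping.lookup m i)"
      using km by (intro prod.cong) (auto simp: pt_eq)
    also have "\<dots> = ?r (?te m) ^ n" by (rule mono_eval[OF km])
    finally show "(\<Prod>i\<in>Poly_Mapping.keys m. pt s d A n i ^ Poly_Mapping.lookup m i) = ?r (?te m) ^ n" .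
  qed
  also have "\<dots> = (\<Sum>e\<in>?te ` Poly_Mapping.keys P. \<Sum>m\<in>{m\<in>Poly_Mapping.keys P. ?te m = e}. Poly_Mapping.lookup P m * ?r (?te m) ^ n)"
    by (rule sum.image_gen) simp
  also have "\<dots> = (\<Sum>e\<in>?te ` Poly_Mapping.keys P. Poly_Mapping.lookup (pi_A s d A P) e * ?r e ^ n)"
    unfolding lookup_pi sum_distrib_right by (intro sum.cong refl) auto
  finally show ?thesis .
qed

lemma pi_zero_iff:
  assumes "P \<in> Kpolys d"
  shows "pi_A s d A P = 0 \<longleftrightarrow> (\<forall>n. eval_mpoly P (pt s d A n) = 0)"
proof
  assume "pi_A s d A P = 0"
  then show "\<forall>n. eval_mpoly P (pt s d A n) = 0" by (simp add: eval_identity[OF assms])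
next
  assume h: "\<forall>n. eval_mpoly P (pt s d A n) = 0"
  let ?te = "toric_exp s d A"
  let ?E = "?te ` Poly_Mapping.keys P"
  let ?r = "\<lambda>e. (rv s (Poly_Mapping.lookup e) :: complex)"
  have inj: "inj_on ?r ?E"
  proof (rule inj_onI)
    fix e1 e2 assume e1: "e1 \<in> ?E" and e2: "e2 \<in> ?E" and eq: "?r e1 = ?r e2"
    show "e1 = e2"
    proof (rule poly_mapping_eqI)
      fix k
      show "Poly_Mapping.lookup e1 k = Poly_Mapping.lookup e2 k"
      proof (cases "k < s")
        case True then show ?thesis using rv_inj[OF eq] by blast
      next
        case False then show ?thesis using e1 e2 by (auto simp: lookup_te)
      qed
    qed
  qed
  have "\<forall>e\<in>?E. Poly_Mapping.lookup (pi_A s d A P) e = 0"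
    by (rule exp_indep[OF _ inj]) (use h eval_identity[OF assms] in auto)
  note z = this
  show "pi_A s d A P = 0"
  proof (rule poly_mapping_eqI)
    fix e
    show "Poly_Mapping.lookup (pi_A s d A P) e = Poly_Mapping.lookup 0 e"
    proof (cases "e \<in> ?E")
      case True then show ?thesis using z by auto
    next
      case False
      then have emp: "{m\<in>Poly_Mapping.keys P. ?te m = e} = {}" by auto
      show ?thesis unfolding lookup_pi emp by simp
    qed
  qed
qed

lemma rv_zero: "rv s (\<lambda>_. 0) = 1"
  by (simp add: rv_def)

lemma nontrivial:
  assumes "k < s" "j < d" "A k j \<noteq> 0"
  shows "nontrivial_loop (Mdiag d (lamq s A)) (vec d (\<lambda>_. 1))"
proof -
  have l1: "lamq s A j \<noteq> 1"
  proof
    assume "lamq s A j = 1"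
    then have "rv s (\<lambda>k. A k j) = (rv s (\<lambda>_. 0) :: rat)" by (simp add: lamq_def rv_zero)
    then have "A k j = 0" using rv_inj assms(1) by fastforce
    then show False using assms(3) by simp
  qed
  have l0: "lamq s A j > 0" unfolding lamq_def by (rule rv_pos)
  let ?M = "Mdiag d (lamq s A)" and ?v = "vec d (\<lambda>_. 1) :: rat vec"
  have orb: "loop_orbit ?M ?v = range (\<lambda>n. (?M ^\<^sub>m n) *\<^sub>v ?v)"
    unfolding loop_orbit_def by auto
  have comp: "((?M ^\<^sub>m n) *\<^sub>v ?v) $ j = lamq s A j ^ n" for n
    using assms(2) by (simp add: Mdiag_pow)
  have "inj (\<lambda>n. (?M ^\<^sub>m n) *\<^sub>v ?v)"
  proof (rule injI)
    fix n m assume "(?M ^\<^sub>m n) *\<^sub>v ?v = (?M ^\<^sub>m m) *\<^sub>v ?v"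
    then have "((?M ^\<^sub>m n) *\<^sub>v ?v) $ j = ((?M ^\<^sub>m m) *\<^sub>v ?v) $ j" by simp
    then have "lamq s A j ^ n = lamq s A j ^ m" unfolding comp .
    then show "n = m" using power_inject_exp'[OF l1 l0] by blast
  qed
  then show ?thesis unfolding nontrivial_loop_def orb by (rule range_inj_infinite)
qed

lemma trivial_case:
  assumes "\<forall>k<s. \<forall>j<d. A k j = 0"
  shows "toric_ideal s d A = ones_ideal d"
proof -
  have te0: "toric_exp s d A m = 0" for m
    by (rule poly_mapping_eqI) (simp add: lookup_te assms)
  have "pi_A s d A p = Poly_Mapping.single 0 (Ssum p)" for p
    unfolding pi_A_def te0 Ssum_def by (simp add: single_sum)
  then have "pi_A s d A p = 0 \<longleftrightarrow> Ssum p = 0" for p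
    by (metis lookup_single_eq single_zero)
  then show ?thesis unfolding toric_ideal_def ones_eq by auto
qed

theorem theorem5p2:
  fixes d :: nat and I :: "mpoly set"
  assumes "is_toric_ideal d I"
    and "I \<noteq> ones_ideal d"
  shows "\<exists>M s. M \<in> carrier_mat d d \<and> s \<in> carrier_vec d \<and>
           nontrivial_loop M s \<and> invariant_ideal d M s = I"
proof -
  obtain s A where I: "I = toric_ideal s d A" using assms(1) unfolding is_toric_ideal_def by blast
  then obtain k j where kj: "k < s" "j < d" "A k j \<noteq> 0"
    using trivial_case[of s d A] assms(2) by blast
  let ?M = "Mdiag d (lamq s A)"
  let ?v = "vec d (\<lambda>_. 1) :: rat vec"
  have "invariant_ideal d ?M ?v = toric_ideal s d A"
    unfolding invariant_ideal_def toric_ideal_def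
    using pi_zero_iff[of _ d s A] by (auto simp: pt_def)
  then show ?thesis using nontrivial[of k s j d A, OF kj] Mdiag_carrier I
    by (intro exI[of _ ?M] exI[of _ ?v]) auto
qed

end
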